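(* Let $q=2^t$. The space $\ker\pi_{P_1}\cap C(P,L_1)$ has dimension $q-1$. More precisely, fix a line $\ell\neq\ell_0$ through $p_0$; then the $q-1$ functions $\chi_\ell-\chi_{\ell'}$, where $\ell'$ ranges over the lines through $p_0$ different from $\ell_0$ and $\ell$, form a basis of $\ker\pi_{P_1}\cap C(P,L_1)$.
   Context: Let $q$ be a prime power and $V$ a $4$-dimensional vector space over $\mathbb{F}_q$ with a nonsingular alternating bilinear form and symplectic basis $e_0,e_1,e_2,e_3$ with $(e_0,e_3)=(e_1,e_2)=1$. $P$ is the set of $1$-dimensional subspaces of $V$ (points), $L$ the set of totally isotropic $2$-dimensional subspaces (lines). $p_0=\langle e_0\rangle$, $\ell_0=\langle e_0,e_1\rangle$; $P_1$ is the set of points $(a:b:c:d)$ with $d\ne0$; $L_1$ is the set of lines sharing no point with $\ell_0$. $\mathbb{F}_2[P]$ is the space of functions $P\to\mathbb{F}_2$, $\chi_\ell$ is the characteristic function of the point set of a line $\ell$, and $C(P,L_1)$ is the $\mathbb{F}_2$-span of $\{\chi_\ell:\ell\in L_1\}$. $\pi_{P_1}:\mathbb{F}_2[P]\to\mathbb{F}_2[P_1]$ is restriction of functions to $P_1$. *)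

theory Defs
  imports "HOL-Analysis.Analysis" "HOL-Library.Z2" "HOL-Library.Function_Algebras"
begin

text \<open>The symplectic space V = F_q^4; the basis vectors e0,e1,e2,e3 are the
  coordinate vectors axis 1 1, axis 2 1, axis 3 1, axis 4 1.\<close>

definition symp :: "'a::field ^ 4 \<Rightarrow> 'a ^ 4 \<Rightarrow> 'a" where
  "symp x y = x$1 * y$4 - x$4 * y$1 + x$2 * y$3 - x$3 * y$2"

definition gq_points :: "('a::field ^ 4) set set" where
  "gq_points = {S. vec.subspace S \<and> vec.dim S = 1}"

definition gq_lines :: "('a::field ^ 4) set set" where
  "gq_lines = {S. vec.subspace S \<and> vec.dim S = 2 \<and> (\<forall>x\<in>S. \<forall>y\<in>S. symp x y = 0)}"

definition p0 :: "('a::field ^ 4) set" where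
  "p0 = vec.span {axis 1 1}"

definition l0 :: "('a::field ^ 4) set" where
  "l0 = vec.span {axis 1 1, axis 2 1}"

definition P1 :: "('a::field ^ 4) set set" where
  "P1 = {p \<in> gq_points. \<exists>v\<in>p. v$4 \<noteq> 0}"

definition L1 :: "('a::field ^ 4) set set" where
  "L1 = {l \<in> gq_lines. \<not> (\<exists>p\<in>gq_points. p \<subseteq> l \<and> p \<subseteq> l0)}"

definition chi :: "('a::field ^ 4) set \<Rightarrow> ('a ^ 4) set \<Rightarrow> bit" where
  "chi l = (\<lambda>p. if p \<in> gq_points \<and> p \<subseteq> l then 1 else 0)"

definition fscale :: "bit \<Rightarrow> ('b \<Rightarrow> bit) \<Rightarrow> ('b \<Rightarrow> bit)" where
  "fscale c f = (\<lambda>x. c * f x)"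

interpretation F2fun: vector_space "fscale :: bit \<Rightarrow> ('b \<Rightarrow> bit) \<Rightarrow> ('b \<Rightarrow> bit)"
  by unfold_locales (simp_all only: fscale_def plus_fun_def fun_eq_iff distrib_left distrib_right mult.assoc mult_1 simp_thms)

definition CPL1 :: "(('a::field ^ 4) set \<Rightarrow> bit) set" where
  "CPL1 = F2fun.span (chi ` L1)"

definition ker_piP1 :: "(('a::field ^ 4) set \<Rightarrow> bit) set" where
  "ker_piP1 = {f. \<forall>p\<in>P1. f p = 0}"

end

theory Submission
  imports Defs
begin
definition mk4 :: "'a \<Rightarrow> 'a \<Rightarrow> 'a \<Rightarrow> 'a \<Rightarrow> 'a^4" where
  "mk4 a b c d = (\<chi> i. if i = 1 then a else if i = 2 then b else if i = 3 then c else d)"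
lemma mk4_comp[simp]: "mk4 a b c d $ 1 = a" "mk4 a b c d $ 2 = b" "mk4 a b c d $ 3 = c" "mk4 a b c d $ 4 = d"
  by (simp_all add: mk4_def)
lemma axis_comp[simp]: "(axis 1 (1::'a::zero_neq_one) :: 'a^4) $ 1 = 1"
 "(axis 1 (1::'a) :: 'a^4) $ 2 = 0" "(axis 1 (1::'a) :: 'a^4) $ 3 = 0" "(axis 1 (1::'a) :: 'a^4) $ 4 = 0"
 "(axis 2 (1::'a) :: 'a^4) $ 1 = 0" "(axis 2 (1::'a) :: 'a^4) $ 2 = 1" "(axis 2 (1::'a) :: 'a^4) $ 3 = 0" "(axis 2 (1::'a) :: 'a^4) $ 4 = 0"
  by (simp_all add: axis_def)
lemma vec4_eq: "(x::'a^4) = y \<longleftrightarrow> x$1=y$1 \<and> x$2=y$2 \<and> x$3=y$3 \<and> x$4=y$4"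
  by (simp add: vec_eq_iff forall_4)
lemma bit_minus: "(a::bit) - b = a + b" by simp
lemma "(a::bit) + a = 0" by simp
lemma char2:
  assumes "CARD('a::{field,finite}) = 2^t" shows "(2::'a) = 0"
proof -
  have "(\<Sum>x\<in>UNIV. x + 1) = (\<Sum>x\<in>(UNIV::'a set). x)"
    by (rule sum.reindex_bij_witness[of _ "\<lambda>x. x - 1" "\<lambda>x. x+1"]) auto
  hence "of_nat CARD('a) = (0::'a)" by (simp add: sum.distrib)
  hence "(2::'a)^t = 0" using assms by simp
  thus ?thesis by simp
qed

lemma sum_fun_app: "(\<Sum>i\<in>A. f i) x = (\<Sum>i\<in>A. f i x)"
  by (induct A rule: infinite_finite_induct) auto

definition pt :: "'a::field^4 \<Rightarrow> ('a^4) set" where "pt v = vec.span {v}"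

lemma mem_pt: "x \<in> pt v \<longleftrightarrow> (\<exists>k. x = k *s v)"
  unfolding pt_def vec.span_singleton by auto

lemma pt_point: "v \<noteq> 0 \<Longrightarrow> pt v \<in> gq_points"
  unfolding gq_points_def pt_def
  by (simp add: vec.dim_span_eq_card_independent vec.independent_insert)

lemma point_pt: assumes "p \<in> gq_points" obtains v where "v \<noteq> 0" "p = pt v"
proof -
  from assms have S: "vec.subspace p" "vec.dim p = 1" by (auto simp: gq_points_def)
  obtain B where B: "B \<subseteq> p" "vec.independent B" "p \<subseteq> vec.span B" "card B = vec.dim p"
    using vec.basis_exists by blast
  then obtain v where "B = {v}" using S card_1_singletonE by metis
  with B have "v \<noteq> 0" using vec.dependent_zero by blast
  moreover have "p = pt v"
    using B \<open>B = {v}\<close> S unfolding pt_def by (metis vec.span_minimal subset_antisym)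
  ultimately show ?thesis using that by blast
qed

lemma pt_sub: "vec.subspace S \<Longrightarrow> pt v \<subseteq> S \<longleftrightarrow> v \<in> S"
  unfolding pt_def using vec.span_minimal vec.span_base by blast

lemma pt_mem_self: "v \<in> pt v" unfolding pt_def by (simp add: vec.span_base)

lemma chi_pt: "v \<noteq> 0 \<Longrightarrow> vec.subspace S \<Longrightarrow> chi S (pt v) = (if v \<in> S then 1 else 0)"
  unfolding chi_def using pt_point pt_sub by auto

lemma chi_nonpt: "p \<notin> gq_points \<Longrightarrow> chi S p = 0"
  unfolding chi_def by auto

lemma pt_scale: assumes "c \<noteq> 0" shows "pt (c *s v) = pt v"
proof (rule set_eqI)
  fix x
  have "(\<exists>k. x = k *s (c *s v)) \<longleftrightarrow> (\<exists>k. x = k *s v)"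
  proof
    assume "\<exists>k. x = k *s (c *s v)" then obtain k where "x = k *s (c *s v)" by blast
    thus "\<exists>k. x = k *s v" by (intro exI[of _ "k*c"]) simp
  next
    assume "\<exists>k. x = k *s v" then obtain k where "x = k *s v" by blast
    thus "\<exists>k. x = k *s (c *s v)" using assms by (intro exI[of _ "k/c"]) simp
  qed
  thus "x \<in> pt (c *s v) \<longleftrightarrow> x \<in> pt v" unfolding mem_pt .
qed

lemma mem_span2: "x \<in> vec.span {u, w} \<longleftrightarrow> (\<exists>s r. x = s *s u + r *s w)"
proof -
  have "\<And>k r. x - k *s u = r *s w \<longleftrightarrow> x = k *s u + r *s w"
    by (metis add.commute diff_eq_eq)
  thus ?thesis unfolding vec.span_breakdown_eq vec.span_singleton by auto
qed

lemma symp_lin: "symp (s *s u + r *s w) (s' *s u + r' *s w) = (s * r' - r * s') * symp u w"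
  unfolding symp_def by (simp add: algebra_simps)

lemma indep2: assumes "u$i * w$j \<noteq> u$j * w$i" shows "vec.independent {u, w}" "u \<noteq> w"
proof -
  show "u \<noteq> w" using assms by (auto simp: mult.commute)
  have w0: "w \<noteq> 0" using assms by auto
  have "u \<notin> vec.span {w}"
  proof
    assume "u \<in> vec.span {w}"
    then obtain k where "u = k *s w" unfolding vec.span_singleton by auto
    hence "u$i = k * w$i" "u$j = k * w$j" by simp_all
    hence "u$i * w$j = u$j * w$i" by (simp add: mult.commute mult.left_commute)
    thus False using assms by simp
  qed
  thus "vec.independent {u, w}"
    using w0 by (simp add: vec.independent_insert)
qed

lemma line2: assumes "u$i * w$j \<noteq> u$j * w$i" "symp u w = 0"
  shows "vec.span {u, w} \<in> gq_lines"
proof -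
  have "vec.dim (vec.span {u,w}) = 2"
  proof -
    have "vec.dim {u,w} = card {u,w}" using indep2[OF assms(1)] vec.dim_eq_card_independent by blast
    thus ?thesis using indep2[OF assms(1)] by (simp add: vec.dim_span)
  qed
  moreover have "\<forall>x\<in>vec.span {u,w}. \<forall>y\<in>vec.span {u,w}. symp x y = 0"
  proof (intro ballI)
    fix x y assume "x \<in> vec.span {u,w}" "y \<in> vec.span {u,w}"
    then obtain s r s' r' where "x = s *s u + r *s w" "y = s' *s u + r' *s w" unfolding mem_span2 by blast
    thus "symp x y = 0" using assms(2) symp_lin[of s u r w s' r'] by simp
  qed
  ultimately show ?thesis unfolding gq_lines_def by simp
qed

lemma indep_zero: assumes "vec.independent {a, b}" "a \<noteq> b" "s *s a + r *s b = 0"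
  shows "s = 0" "r = 0"
proof -
  have sm: "(\<Sum>v\<in>{a,b}. (if v = a then s else r) *s v) = s *s a + r *s b" using assms(2) by simp
  have h: "\<forall>S\<subseteq>{a,b}. finite S \<longrightarrow> (\<forall>u. (\<Sum>v\<in>S. u v *s v) = 0 \<longrightarrow> (\<forall>v\<in>S. u v = 0))"
    using assms(1) unfolding vec.independent_explicit_finite_subsets .
  have "\<forall>v\<in>{a,b}. (if v = a then s else r) = 0"
    using h[rule_format, OF order_refl, of "\<lambda>v. if v = a then s else r"] sm assms(3) by simp
  thus "s = 0" "r = 0" using assms(2) by auto
qed

lemma e0_comp[simp]: "(axis 1 1 :: 'a::field^4) = mk4 1 0 0 0" "(axis 2 1 :: 'a::field^4) = mk4 0 1 0 0"
  by (simp_all add: vec4_eq)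

lemma mk4_ops[simp]: "c *s mk4 a b d e = mk4 (c*a) (c*b) (c*d) (c*e)"
  "mk4 a b d e + mk4 a' b' d' e' = mk4 (a+a') (b+b') (d+d') (e+e')"
  "mk4 a b d e - mk4 a' b' d' e' = mk4 (a-a') (b-b') (d-d') (e-e')"
  "mk4 a b d e = 0 \<longleftrightarrow> a = 0 \<and> b = 0 \<and> d = 0 \<and> e = 0"
  by (simp_all add: vec4_eq)

lemma mem_p0: "x \<in> (p0::('a::field^4) set) \<longleftrightarrow> x$2 = 0 \<and> x$3 = 0 \<and> x$4 = 0"
proof -
  have "(\<exists>k. x = k *s mk4 1 0 0 (0::'a)) \<longleftrightarrow> x$2 = 0 \<and> x$3 = 0 \<and> x$4 = 0"
    by (auto simp: vec4_eq)
  thus ?thesis unfolding p0_def vec.span_singleton by (auto simp: image_def)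
qed

lemma mem_l0: "x \<in> (l0::('a::field^4) set) \<longleftrightarrow> x$3 = 0 \<and> x$4 = 0"
  unfolding l0_def mem_span2 by (auto simp: vec4_eq intro!: exI[of _ "x$1"] exI[of _ "x$2"])

definition Mb :: "'a::field \<Rightarrow> ('a^4) set" where "Mb b = vec.span {mk4 1 0 0 0, mk4 0 b 1 0}"
definition mL :: "'a::field \<Rightarrow> 'a \<Rightarrow> 'a \<Rightarrow> ('a^4) set" where "mL a b x = vec.span {mk4 a b 1 0, mk4 x a 0 1}"

lemma mem_Mb: "v \<in> Mb b \<longleftrightarrow> v$4 = 0 \<and> v$2 = b * v$3"
  unfolding Mb_def mem_span2 by (auto simp: vec4_eq mult.commute intro!: exI[of _ "v$1"] exI[of _ "v$3"])

lemma mem_mL: "v \<in> mL a b x \<longleftrightarrow> v$1 = v$3*a + v$4*x \<and> v$2 = v$3*b + v$4*a"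
  unfolding mL_def mem_span2 by (auto simp: vec4_eq intro!: exI[of _ "v$3"] exI[of _ "v$4"])

lemma sub_Mb[simp]: "vec.subspace (Mb b)" unfolding Mb_def by simp
lemma sub_mL[simp]: "vec.subspace (mL a b x)" unfolding mL_def by simp
lemma sub_l0[simp]: "vec.subspace l0" unfolding l0_def by simp
lemma sub_p0[simp]: "vec.subspace p0" unfolding p0_def by simp

lemma Mb_line: "Mb b \<in> gq_lines"
  unfolding Mb_def by (rule line2[of _ 1 _ 3]) (simp_all add: symp_def)
lemma mL_line: "mL a b x \<in> gq_lines"
  unfolding mL_def by (rule line2[of _ 3 _ 4]) (simp_all add: symp_def)
lemma l0_line: "(l0::('a::field^4) set) \<in> gq_lines"
  unfolding l0_def by (simp, rule line2[of _ 1 _ 2]) (simp_all add: symp_def)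

lemma mL_L1: "mL a b x \<in> L1"
proof -
  have "\<not> (\<exists>p\<in>gq_points. p \<subseteq> mL a b x \<and> p \<subseteq> l0)"
  proof
    assume "\<exists>p\<in>gq_points. p \<subseteq> mL a b x \<and> p \<subseteq> l0"
    then obtain p where p: "p \<in> gq_points" "p \<subseteq> mL a b x" "p \<subseteq> l0" by blast
    obtain v where v: "v \<noteq> 0" "p = pt v" using point_pt[OF p(1)] by metis
    hence "v \<in> mL a b x" "v \<in> l0" using p pt_sub sub_mL sub_l0 by blast+
    hence "v$3 = 0" "v$4 = 0" "v$1 = 0" "v$2 = 0" unfolding mem_mL mem_l0 by simp_all
    thus False using v(1) by (simp add: vec4_eq)
  qed
  thus ?thesis unfolding L1_def using mL_line by blast
qed

lemma p0_Mb: "p0 \<subseteq> Mb b" by (auto simp: mem_p0 mem_Mb)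
lemma Mb_ne_l0: "Mb b \<noteq> l0"
proof
  assume "Mb b = l0"
  moreover have "mk4 0 b 1 0 \<in> Mb b" by (simp add: mem_Mb)
  ultimately show False by (simp add: mem_l0)
qed
lemma Mb_inj: "Mb b = Mb b' \<longleftrightarrow> b = b'"
proof
  assume "Mb b = Mb b'"
  moreover have "mk4 0 b 1 0 \<in> Mb b" by (simp add: mem_Mb)
  ultimately show "b = b'" by (simp add: mem_Mb)
qed simp

lemma lines_p0: fixes l :: "('a::field^4) set" assumes "l \<in> gq_lines" "p0 \<subseteq> l" "l \<noteq> l0" shows "\<exists>b. l = Mb b"
proof -
  have S: "vec.subspace l" "vec.dim l = 2" and iso: "\<forall>x\<in>l. \<forall>y\<in>l. symp x y = 0"
    using assms(1) by (auto simp: gq_lines_def)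
  have e0: "mk4 1 0 0 0 \<in> l" using assms(2) by (auto simp: mem_p0)
  have h4: "\<forall>x\<in>l. x$4 = 0"
  proof
    fix x assume "x \<in> l" hence "symp (mk4 1 0 0 0) x = 0" using iso e0 by blast
    thus "x$4 = 0" by (simp add: symp_def)
  qed
  show ?thesis
  proof (cases "\<exists>x\<in>l. x$3 \<noteq> 0")
    case True
    then obtain x where x: "x \<in> l" "x$3 \<noteq> 0" by blast
    define u where "u = (1/x$3) *s x - (x$1/x$3) *s mk4 1 0 0 0"
    have "u \<in> l" unfolding u_def using S x e0 by (intro vec.subspace_diff vec.subspace_scale) auto
    moreover have "u = mk4 0 (x$2/x$3) 1 0" unfolding u_def using x h4 by (simp add: vec4_eq)
    ultimately have "Mb (x$2/x$3) \<subseteq> l" unfolding Mb_def using e0 S by (intro vec.span_minimal) auto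
    hence "Mb (x$2/x$3) = l" using S Mb_line[of "x$2/x$3"]
      by (intro vec.subspace_dim_equal) (auto simp: gq_lines_def)
    thus ?thesis by metis
  next
    case False
    hence "l \<subseteq> l0" using h4 by (auto simp: mem_l0)
    moreover have "(l0::('a^4) set) \<in> gq_lines" by (rule l0_line)
    ultimately have "l = l0" using S by (intro vec.subspace_dim_equal) (auto simp: gq_lines_def)
    thus ?thesis using assms(3) by simp
  qed
qed

lemma L1_param: fixes m :: "('a::field^4) set" assumes "m \<in> L1" shows "\<exists>a b x. m = mL a b x"
proof -
  have S: "vec.subspace m" "vec.dim m = 2" and iso: "\<forall>x\<in>m. \<forall>y\<in>m. symp x y = 0"
    and nop: "\<not> (\<exists>p\<in>gq_points. p \<subseteq> m \<and> p \<subseteq> l0)"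
    using assms by (auto simp: L1_def gq_lines_def)
  have nol0: "v = 0" if "v \<in> m" "v$3 = 0" "v$4 = 0" for v
  proof (rule ccontr)
    assume "v \<noteq> 0"
    hence "pt v \<in> gq_points" by (rule pt_point)
    moreover have "pt v \<subseteq> m" using that S pt_sub by blast
    moreover have "pt v \<subseteq> l0" using that by (simp add: pt_sub mem_l0)
    ultimately show False using nop by blast
  qed
  obtain B where B: "B \<subseteq> m" "vec.independent B" "m \<subseteq> vec.span B" "card B = vec.dim m"
    using vec.basis_exists by blast
  then obtain a b where ab: "B = {a, b}" "a \<noteq> b" using S(2) card_2_iff by metis
  have am: "a \<in> m" and bm: "b \<in> m" using B ab by auto
  have ind: "vec.independent {a,b}" using B ab by simp
  have a0: "a \<noteq> 0" using ind vec.dependent_zero by blast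
  define D where "D = a$3 * b$4 - a$4 * b$3"
  have D0: "D \<noteq> 0"
  proof
    assume D: "D = 0"
    define c where "c = b$4 *s a - a$4 *s b"
    have "c \<in> m" unfolding c_def using S am bm by (intro vec.subspace_diff vec.subspace_scale) auto
    moreover have "c$3 = 0" "c$4 = 0" using D unfolding c_def D_def by (simp_all add: mult.commute)
    ultimately have "c = 0" using nol0 by blast
    hence e: "b$4 *s a + (- a$4) *s b = 0" unfolding c_def by simp
    have a4: "b$4 = 0" "a$4 = 0" using indep_zero(1)[OF ind ab(2) e] indep_zero(2)[OF ind ab(2) e] by auto
    define c' where "c' = b$3 *s a - a$3 *s b"
    have "c' \<in> m" unfolding c'_def using S am bm by (intro vec.subspace_diff vec.subspace_scale) auto
    moreover have "c'$3 = 0" "c'$4 = 0" using a4 unfolding c'_def by (simp_all add: mult.commute)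
    ultimately have "c' = 0" using nol0 by blast
    hence e': "b$3 *s a + (- a$3) *s b = 0" unfolding c'_def by simp
    have "b$3 = 0" "a$3 = 0" using indep_zero(1)[OF ind ab(2) e'] indep_zero(2)[OF ind ab(2) e'] by auto
    hence "a = 0" using nol0[OF am] a4 by simp
    thus False using a0 by simp
  qed
  define y where "y = (b$4/D) *s a - (a$4/D) *s b"
  define w where "w = (a$3/D) *s b - (b$3/D) *s a"
  have ym: "y \<in> m" unfolding y_def using S am bm by (intro vec.subspace_diff vec.subspace_scale) auto
  have wm: "w \<in> m" unfolding w_def using S am bm by (intro vec.subspace_diff vec.subspace_scale) auto
  have y3: "y$3 = (a$3 * b$4 - a$4 * b$3) / D" unfolding y_def using D0 by (simp add: field_simps)
  have w4: "w$4 = (a$3 * b$4 - a$4 * b$3) / D" unfolding w_def using D0 by (simp add: field_simps)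
  have y34: "y$3 = 1" "y$4 = 0" using y3 D0 unfolding D_def apply simp unfolding y_def by (simp add: field_simps)
  have w34: "w$3 = 0" "w$4 = 1"
    subgoal unfolding w_def by (simp add: field_simps)
    subgoal using w4 D0 unfolding D_def by simp
    done
  have "symp y w = 0" using iso ym wm by blast
  hence w2: "w$2 = y$1" using y34 w34 by (simp add: symp_def)
  have yv: "y = mk4 (y$1) (y$2) 1 0" using y34 by (simp add: vec4_eq)
  have wv: "w = mk4 (w$1) (y$1) 0 1" using w34 w2 by (simp add: vec4_eq)
  have "mk4 (y$1) (y$2) 1 0 \<in> m" "mk4 (w$1) (y$1) 0 1 \<in> m" using ym wm yv wv by metis+
  hence "mL (y$1) (y$2) (w$1) \<subseteq> m" unfolding mL_def using S
    by (intro vec.span_minimal) auto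
  hence "mL (y$1) (y$2) (w$1) = m" using S mL_line[of "y$1" "y$2" "w$1"]
    by (intro vec.subspace_dim_equal) (auto simp: gq_lines_def)
  thus ?thesis by metis
qed

lemma chi_mL: "v \<noteq> 0 \<Longrightarrow> chi (mL a b x) (pt v) = of_bool (v$1 = v$3*a + v$4*x \<and> v$2 = v$3*b + v$4*a)"
  by (simp add: chi_pt mem_mL)
lemma chi_Mb: "v \<noteq> 0 \<Longrightarrow> chi (Mb b) (pt v) = of_bool (v$4 = 0 \<and> v$2 = b * v$3)"
  by (simp add: chi_pt mem_Mb)

lemma span_lin:
  assumes "f \<in> F2fun.span A" "\<And>g. g \<in> A \<Longrightarrow> \<phi> g = (0::bit)" "\<phi> 0 = 0"
    "\<And>g h. \<phi> (g + h) = \<phi> g + \<phi> h"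
  shows "\<phi> f = 0"
proof -
  have "F2fun.subspace {f. \<phi> f = 0}"
  proof (rule F2fun.subspaceI)
    show "0 \<in> {f. \<phi> f = 0}" using assms(3) by simp
    show "x + y \<in> {f. \<phi> f = 0}" if "x \<in> {f. \<phi> f = 0}" "y \<in> {f. \<phi> f = 0}" for x y
      using that assms(4) by simp
    show "fscale c x \<in> {f. \<phi> f = 0}" if "x \<in> {f. \<phi> f = 0}" for c x
    proof (cases "c = 0")
      case True
      hence "fscale c x = 0" by (simp add: fscale_def fun_eq_iff)
      thus ?thesis using assms(3) by (simp only: mem_Collect_eq)
    next
      case False
      hence "fscale c x = x" by (simp add: fscale_def fun_eq_iff)
      thus ?thesis using that by simp
    qed
  qed
  thus ?thesis using F2fun.span_induct[OF assms(1), of "\<lambda>f. \<phi> f = 0"] assms(2) by blast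
qed

lemma sum_unique:
  assumes "\<And>s. P s \<longleftrightarrow> s = c \<and> Q"
  shows "(\<Sum>s\<in>(UNIV::'a::finite set). of_bool (P s) :: bit) = of_bool Q"
proof -
  have "(\<Sum>s\<in>(UNIV::'a set). of_bool (P s) :: bit) = (\<Sum>s\<in>UNIV. if s = c then of_bool Q else 0)"
    using assms by (intro sum.cong) auto
  thus ?thesis by simp
qed

lemma sum_zero_bit: assumes "\<And>s. \<not> P s" shows "(\<Sum>s\<in>A. of_bool (P s) :: bit) = 0"
  using assms by simp

lemma even_bit: "even n \<Longrightarrow> (of_nat n :: bit) = 0"
  by (elim evenE) simp

lemma alg_div: "d \<noteq> 0 \<Longrightarrow> (s*d = y) \<longleftrightarrow> s = y/(d::'a::field)"
  by (simp add: eq_divide_eq)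
lemma alg_lin: "(s*b + a2 = s*\<beta> + \<alpha>) \<longleftrightarrow> s*(b-\<beta>) = \<alpha> - (a2::'a::field)"
  by (auto simp: algebra_simps)
lemma alg_lin2: "(s*a1 = s*\<alpha> + x) \<longleftrightarrow> s*(a1-\<alpha>) = (x::'a::field)"
  by (auto simp: algebra_simps)

lemma sum_lin_count:
  assumes ev: "even CARD('a::{field,finite})"
  shows "(\<Sum>c\<in>(UNIV::'a set). of_bool (c*a + x = 0) :: bit) = of_bool (a \<noteq> 0)"
proof (cases "a = 0")
  case True
  have "(\<Sum>c\<in>(UNIV::'a set). of_bool (c*a + x = 0) :: bit) = of_nat CARD('a) * of_bool (x = 0)"
    using True by simp
  thus ?thesis using even_bit[OF ev] True by simp
next
  case False
  have "\<And>c. c*a + x = 0 \<longleftrightarrow> c = (-x)/a \<and> True"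
  proof -
    fix c
    have "c*a + x = 0 \<longleftrightarrow> c*a = -x" by (simp add: eq_neg_iff_add_eq_0)
    also have "\<dots> \<longleftrightarrow> c = (-x)/a" using alg_div[OF False] .
    finally show "c*a + x = 0 \<longleftrightarrow> c = (-x)/a \<and> True" by simp
  qed
  thus ?thesis using sum_unique[of "\<lambda>c. c*a + x = 0" "(-x)/a" True] False by simp
qed

definition phi2 :: "'a::{field,finite} \<Rightarrow> 'a \<Rightarrow> 'a \<Rightarrow> (('a^4) set \<Rightarrow> bit) \<Rightarrow> bit" where
  "phi2 a1 a2 b f = f (pt (mk4 a1 b 1 0)) + f (pt (mk4 a2 b 1 0))
     + (\<Sum>s\<in>UNIV. f (pt (mk4 (s*a1) (s*b + a2) s 1))) + (\<Sum>s\<in>UNIV. f (pt (mk4 (s*a2) (s*b + a1) s 1)))"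

definition phi3 :: "(('a::{field,finite}^4) set \<Rightarrow> bit) \<Rightarrow> bit" where
  "phi3 f = (\<Sum>b\<in>UNIV. \<Sum>c\<in>UNIV. f (pt (mk4 0 b c 1))) + (\<Sum>a\<in>UNIV. \<Sum>c\<in>UNIV. f (pt (mk4 a 0 c 1)))
     + (\<Sum>b\<in>UNIV. f (pt (mk4 0 b 1 0))) + (\<Sum>a\<in>UNIV. f (pt (mk4 a 0 1 0)))"

lemma fadd_app: "(g + h) x = g x + h x" by (simp add: plus_fun_def)
lemma fzero_app: "(0::'x\<Rightarrow>'y::zero) x = 0" by simp

lemma phi2_lin: "phi2 a1 a2 b (g + h) = phi2 a1 a2 b g + phi2 a1 a2 b h" "phi2 a1 a2 b 0 = 0"
  unfolding phi2_def fadd_app fzero_app sum.distrib by (simp_all only: ac_simps sum.neutral_const add_0)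
lemma phi3_lin: "phi3 (g + h) = phi3 g + phi3 h" "phi3 0 = 0"
  unfolding phi3_def fadd_app fzero_app sum.distrib by (simp_all only: ac_simps sum.neutral_const add_0)

lemma phi2_mL: assumes "a1 \<noteq> a2" shows "phi2 a1 a2 b (chi (mL \<alpha> \<beta> x)) = 0"
proof (cases "b = \<beta>")
  case True
  have t3: "(\<Sum>s\<in>(UNIV::'a set). chi (mL \<alpha> \<beta> x) (pt (mk4 (s*a1) (s*b + a2) s 1))) = of_bool (\<alpha> = a2)"
  proof -
    have "\<And>s. (s*a1 = s*\<alpha> + x \<and> s*b + a2 = s*\<beta> + \<alpha>) \<longleftrightarrow> s = x/(a1-a2) \<and> \<alpha> = a2"
      unfolding alg_lin alg_lin2 using True assms by (auto simp: alg_div)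
    thus ?thesis using sum_unique[of _ "x/(a1-a2)" "\<alpha> = a2"] by (simp add: chi_mL)
  qed
  have t4: "(\<Sum>s\<in>(UNIV::'a set). chi (mL \<alpha> \<beta> x) (pt (mk4 (s*a2) (s*b + a1) s 1))) = of_bool (\<alpha> = a1)"
  proof -
    have "\<And>s. (s*a2 = s*\<alpha> + x \<and> s*b + a1 = s*\<beta> + \<alpha>) \<longleftrightarrow> s = x/(a2-a1) \<and> \<alpha> = a1"
      unfolding alg_lin alg_lin2 using True assms by (auto simp: alg_div)
    thus ?thesis using sum_unique[of _ "x/(a2-a1)" "\<alpha> = a1"] by (simp add: chi_mL)
  qed
  have t12: "chi (mL \<alpha> \<beta> x) (pt (mk4 a1 b 1 0)) = of_bool (\<alpha> = a1)"
       "chi (mL \<alpha> \<beta> x) (pt (mk4 a2 b 1 0)) = of_bool (\<alpha> = a2)"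
    using True by (auto simp: chi_mL)
  show ?thesis unfolding phi2_def t3 t4 t12 by (cases "\<alpha> = a1"; cases "\<alpha> = a2") simp_all
next
  case False
  hence d: "b - \<beta> \<noteq> 0" by simp
  define s0 where "s0 = (\<alpha> - a2)/(b - \<beta>)"
  define s1 where "s1 = (\<alpha> - a1)/(b - \<beta>)"
  have t3: "(\<Sum>s\<in>(UNIV::'a set). chi (mL \<alpha> \<beta> x) (pt (mk4 (s*a1) (s*b + a2) s 1))) = of_bool (s0*(a1-\<alpha>) = x)"
  proof -
    have "\<And>s. (s*a1 = s*\<alpha> + x \<and> s*b + a2 = s*\<beta> + \<alpha>) \<longleftrightarrow> s = s0 \<and> s0*(a1-\<alpha>) = x"
      unfolding alg_lin alg_lin2 alg_div[OF d] s0_def by auto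
    thus ?thesis using sum_unique[of _ s0 "s0*(a1-\<alpha>) = x"] by (simp add: chi_mL)
  qed
  have t4: "(\<Sum>s\<in>(UNIV::'a set). chi (mL \<alpha> \<beta> x) (pt (mk4 (s*a2) (s*b + a1) s 1))) = of_bool (s1*(a2-\<alpha>) = x)"
  proof -
    have "\<And>s. (s*a2 = s*\<alpha> + x \<and> s*b + a1 = s*\<beta> + \<alpha>) \<longleftrightarrow> s = s1 \<and> s1*(a2-\<alpha>) = x"
      unfolding alg_lin alg_lin2 alg_div[OF d] s1_def by auto
    thus ?thesis using sum_unique[of _ s1 "s1*(a2-\<alpha>) = x"] by (simp add: chi_mL)
  qed
  have e1: "s0*(a1-\<alpha>) = ((\<alpha> - a2)*(a1-\<alpha>))/(b-\<beta>)" unfolding s0_def by simp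
  have e2: "s1*(a2-\<alpha>) = ((\<alpha> - a1)*(a2-\<alpha>))/(b-\<beta>)" unfolding s1_def by simp
  have "(\<alpha> - a2)*(a1-\<alpha>) = (\<alpha> - a1)*(a2-\<alpha>)" by (simp add: algebra_simps)
  hence e: "s0*(a1-\<alpha>) = s1*(a2-\<alpha>)" using e1 e2 by simp
  have t12: "chi (mL \<alpha> \<beta> x) (pt (mk4 a1 b 1 0)) = 0"
       "chi (mL \<alpha> \<beta> x) (pt (mk4 a2 b 1 0)) = 0"
    using False by (auto simp: chi_mL)
  show ?thesis unfolding phi2_def t3 t4 t12 e by simp
qed

lemma phi3_mL: assumes ev: "even CARD('a::{field,finite})"
  shows "phi3 (chi (mL (\<alpha>::'a) \<beta> x)) = 0"
proof -
  let ?m = "mL \<alpha> \<beta> x"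
  have A: "(\<Sum>b\<in>UNIV. \<Sum>c\<in>UNIV. chi ?m (pt (mk4 0 b c 1))) = of_bool (\<alpha> \<noteq> 0)"
  proof -
    have "(\<Sum>b\<in>UNIV. \<Sum>c\<in>UNIV. chi ?m (pt (mk4 0 b c 1))) = (\<Sum>c\<in>UNIV. \<Sum>b\<in>UNIV. of_bool (b = c*\<beta> + \<alpha> \<and> c*\<alpha> + x = 0))"
      by (subst sum.swap) (auto simp: chi_mL intro!: sum.cong arg_cong[where f=of_bool])
    also have "\<dots> = (\<Sum>c\<in>UNIV. of_bool (c*\<alpha> + x = 0))"
      by (rule sum.cong[OF refl], rule sum_unique) auto
    also have "\<dots> = of_bool (\<alpha> \<noteq> 0)" by (rule sum_lin_count[OF ev])
    finally show ?thesis .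
  qed
  have B: "(\<Sum>a\<in>UNIV. \<Sum>c\<in>UNIV. chi ?m (pt (mk4 a 0 c 1))) = of_bool (\<beta> \<noteq> 0)"
  proof -
    have "(\<Sum>a\<in>UNIV. \<Sum>c\<in>UNIV. chi ?m (pt (mk4 a 0 c 1))) = (\<Sum>c\<in>UNIV. \<Sum>a\<in>UNIV. of_bool (a = c*\<alpha> + x \<and> c*\<beta> + \<alpha> = 0))"
      by (subst sum.swap) (auto simp: chi_mL intro!: sum.cong arg_cong[where f=of_bool])
    also have "\<dots> = (\<Sum>c\<in>UNIV. of_bool (c*\<beta> + \<alpha> = 0))"
      by (rule sum.cong[OF refl], rule sum_unique) auto
    also have "\<dots> = of_bool (\<beta> \<noteq> 0)" by (rule sum_lin_count[OF ev])
    finally show ?thesis .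
  qed
  have C: "(\<Sum>b\<in>UNIV. chi ?m (pt (mk4 0 b 1 0))) = of_bool (\<alpha> = 0)"
  proof -
    have "(\<Sum>b\<in>UNIV. chi ?m (pt (mk4 0 b 1 0))) = (\<Sum>b\<in>UNIV. of_bool (b = \<beta> \<and> \<alpha> = 0))"
      by (auto simp: chi_mL intro!: sum.cong arg_cong[where f=of_bool])
    also have "\<dots> = of_bool (\<alpha> = 0)" by (rule sum_unique) auto
    finally show ?thesis .
  qed
  have D: "(\<Sum>a\<in>UNIV. chi ?m (pt (mk4 a 0 1 0))) = of_bool (\<beta> = 0)"
  proof -
    have "(\<Sum>a\<in>UNIV. chi ?m (pt (mk4 a 0 1 0))) = (\<Sum>a\<in>UNIV. of_bool (a = \<alpha> \<and> \<beta> = 0))"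
      by (auto simp: chi_mL intro!: sum.cong arg_cong[where f=of_bool])
    also have "\<dots> = of_bool (\<beta> = 0)" by (rule sum_unique) auto
    finally show ?thesis .
  qed
  show ?thesis unfolding phi3_def A B C D by (cases "\<alpha> = 0"; cases "\<beta> = 0") simp_all
qed

lemma key_alg2: assumes "\<delta> \<noteq> 0" "v3*\<delta> + v4*(A1+A2) = (0::'a::field)"
  shows "v3*A1 + v4*(A1*A1/\<delta>) = v3*A2 + v4*(A2*A2/\<delta>)"
proof -
  have "(v3*A1 + v4*(A1*A1/\<delta>)) - (v3*A2 + v4*(A2*A2/\<delta>)) = ((A1 - A2)*(v3*\<delta> + v4*(A1+A2)))/\<delta>"
    using assms(1) by (simp add: field_simps)
  thus ?thesis using assms(2) by simp
qed

lemma key_alg1: assumes "(2::'a::field) = 0" "(v4::'a) \<noteq> 0"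
  shows "v3*(b1-b2) + v4*((v2 - v3*b1)/v4 + (v2 - v3*b2)/v4) = 0"
proof -
  have e1: "v4*((v2 - v3*b1)/v4) = v2 - v3*b1" using assms(2) by simp
  have e2: "v4*((v2 - v3*b2)/v4) = v2 - v3*b2" using assms(2) by simp
  have "v4*((v2 - v3*b1)/v4 + (v2 - v3*b2)/v4) = (v2 - v3*b1) + (v2 - v3*b2)"
    unfolding distrib_left e1 e2 ..
  hence "v3*(b1-b2) + v4*((v2 - v3*b1)/v4 + (v2 - v3*b2)/v4) = 2 * (v2 - v3*b2)"
    by (simp add: algebra_simps)
  thus ?thesis by (simp only: assms(1) mult_zero_left)
qed

lemma key_alg: assumes "(2::'a::field) = 0" "(v4::'a) \<noteq> 0" "b1 \<noteq> b2"
  shows "v3*((v2 - v3*b1)/v4) + v4*(((v2 - v3*b1)/v4)*((v2 - v3*b1)/v4)/(b1-b2))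
       = v3*((v2 - v3*b2)/v4) + v4*(((v2 - v3*b2)/v4)*((v2 - v3*b2)/v4)/(b1-b2))"
proof -
  have d: "b1 - b2 \<noteq> 0" using assms(3) by (metis right_minus_eq)
  show ?thesis by (rule key_alg2[OF d key_alg1[OF assms(1,2)]])
qed

lemma solve_lin: "(v4::'a::field) \<noteq> 0 \<Longrightarrow> (v2 = v3*b + v4*\<alpha>) \<longleftrightarrow> \<alpha> = (v2 - v3*b)/v4"
proof -
  assume h: "v4 \<noteq> 0"
  have "(v2 = v3*b + v4*\<alpha>) \<longleftrightarrow> \<alpha>* v4 = v2 - v3*b" by (auto simp: algebra_simps)
  also have "\<dots> \<longleftrightarrow> \<alpha> = (v2 - v3*b)/v4" by (rule alg_div[OF h])
  finally show ?thesis .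
qed

lemma chi_Mb_sum:
  fixes b1 b2 :: "'a::{field,finite}"
  assumes c2: "(2::'a) = 0" and ne: "b1 \<noteq> b2"
  shows "chi (Mb b1) + chi (Mb b2) = (\<Sum>\<alpha>\<in>UNIV. chi (mL \<alpha> b1 (\<alpha>*\<alpha>/(b1-b2)))) + (\<Sum>\<alpha>\<in>UNIV. chi (mL \<alpha> b2 (\<alpha>*\<alpha>/(b1-b2))))"
proof (rule ext)
  fix p
  show "(chi (Mb b1) + chi (Mb b2)) p = ((\<Sum>\<alpha>\<in>UNIV. chi (mL \<alpha> b1 (\<alpha>*\<alpha>/(b1-b2)))) + (\<Sum>\<alpha>\<in>UNIV. chi (mL \<alpha> b2 (\<alpha>*\<alpha>/(b1-b2))))) p"
  proof (cases "p \<in> gq_points")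
    case False thus ?thesis by (simp add: fadd_app sum_fun_app chi_nonpt)
  next
    case True then obtain v where v: "v \<noteq> 0" "p = pt v" by (metis point_pt)
    have R: "\<And>b. (\<Sum>\<alpha>\<in>UNIV. chi (mL \<alpha> b (\<alpha>*\<alpha>/(b1-b2)))) p
        = (\<Sum>\<alpha>\<in>UNIV. of_bool (v$1 = v$3*\<alpha> + v$4*(\<alpha>*\<alpha>/(b1-b2)) \<and> v$2 = v$3*b + v$4*\<alpha>))"
      unfolding v(2) sum_fun_app using v(1) by (simp add: chi_mL)
    have L: "chi (Mb b1) p + chi (Mb b2) p = of_bool (v$4 = 0 \<and> v$2 = b1* v$3) + of_bool (v$4 = 0 \<and> v$2 = b2* v$3)"
      unfolding v(2) using v(1) by (simp add: chi_Mb)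
    have X: "(of_bool (v$4 = 0 \<and> v$2 = b1* v$3) :: bit) + of_bool (v$4 = 0 \<and> v$2 = b2* v$3) =
        (\<Sum>\<alpha>\<in>UNIV. of_bool (v$1 = v$3*\<alpha> + v$4*(\<alpha>*\<alpha>/(b1-b2)) \<and> v$2 = v$3*b1 + v$4*\<alpha>)) +
        (\<Sum>\<alpha>\<in>UNIV. of_bool (v$1 = v$3*\<alpha> + v$4*(\<alpha>*\<alpha>/(b1-b2)) \<and> v$2 = v$3*b2 + v$4*\<alpha>))"
    proof (cases "v$4 = 0")
      case False
      have S: "(\<Sum>\<alpha>\<in>UNIV. of_bool (v$1 = v$3*\<alpha> + v$4*(\<alpha>*\<alpha>/(b1-b2)) \<and> v$2 = v$3*b + v$4*\<alpha>))
         = (of_bool (v$1 = v$3*((v$2 - v$3*b)/v$4) + v$4*(((v$2 - v$3*b)/v$4)*((v$2 - v$3*b)/v$4)/(b1-b2))) :: bit)" for b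
        by (rule sum_unique[where c="(v$2 - v$3*b)/v$4"]) (auto simp: solve_lin[OF False])
      show ?thesis
        unfolding S key_alg[OF c2 False ne] using False by simp
    next
      case z4: True
      show ?thesis
      proof (cases "v$3 = 0")
        case z3: True
        have "\<not> (v$1 = 0 \<and> v$2 = 0)" using v(1) z3 z4 by (auto simp: vec4_eq)
        hence "\<And>b \<alpha>. \<not> (v$1 = v$3*\<alpha> + v$4*(\<alpha>*\<alpha>/(b1-b2)) \<and> v$2 = v$3*b + v$4*\<alpha>)"
          using z3 z4 by simp
        thus ?thesis using z3 z4 by simp
      next
        case False
        have S: "(\<Sum>\<alpha>\<in>UNIV. of_bool (v$1 = v$3*\<alpha> + v$4*(\<alpha>*\<alpha>/(b1-b2)) \<and> v$2 = v$3*b + v$4*\<alpha>))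
           = (of_bool (v$2 = b * v$3) :: bit)" for b
        proof (rule sum_unique)
          fix \<alpha>
          have "v$1 = v$3*\<alpha> \<longleftrightarrow> \<alpha> = v$1/v$3" using alg_div[OF False, of \<alpha> "v$1"] by (auto simp: mult.commute)
          thus "(v$1 = v$3*\<alpha> + v$4*(\<alpha>*\<alpha>/(b1-b2)) \<and> v$2 = v$3*b + v$4*\<alpha>) \<longleftrightarrow> \<alpha> = v$1/v$3 \<and> v$2 = b* v$3"
            using z4 by (auto simp: mult.commute)
        qed
        show ?thesis unfolding S using z4 by simp
      qed
    qed
    thus ?thesis unfolding fadd_app L R .
  qed
qed

lemma char2':
  assumes "CARD('a::{field,finite}) = 2^t" shows "(2::'a) = 0" "t > 0"
proof -
  have "(\<Sum>x\<in>UNIV. x + 1) = (\<Sum>x\<in>(UNIV::'a set). x)"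
    by (rule sum.reindex_bij_witness[of _ "\<lambda>x. x - 1" "\<lambda>x. x+1"]) auto
  hence "of_nat CARD('a) = (0::'a)" by (simp add: sum.distrib)
  hence h: "(2::'a)^t = 0" using assms by simp
  thus "(2::'a) = 0" by simp
  show "t > 0" using h by (cases t) auto
qed

lemma of_nat_bit: "(of_nat n :: bit) = of_bool (odd n)"
  by (induct n) auto

lemma bit_eq_of_bool: "(x::bit) = of_bool (x = 1)"
  by (cases "x = 0") auto

lemma bit_add0: "(a::bit) + b = 0 \<Longrightarrow> a = b"
  by (cases "a = 0"; cases "b = 0") auto

lemma fminus_bit: "(g::'x \<Rightarrow> bit) - h = g + h"
  by (rule ext) (simp add: plus_fun_def)

lemma sum_const_fun: "(\<Sum>b\<in>A. (g::'x\<Rightarrow>bit)) = (\<lambda>x. of_nat (card A) * g x)"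
  by (rule ext) (simp add: sum_fun_app)

lemma fscale_app: "fscale c g x = c * g x" by (simp add: fscale_def)

lemma chi_inj: assumes "vec.subspace S" "vec.subspace T" "chi S = chi T" shows "S = T"
proof -
  have *: "S' \<subseteq> T'" if "vec.subspace S'" "vec.subspace T'" "chi S' = chi T'" for S' T' :: "('a::field^4) set"
  proof
    fix v assume "v \<in> S'"
    show "v \<in> T'"
    proof (cases "v = 0")
      case True thus ?thesis using that vec.subspace_0 by blast
    next
      case False
      have "chi S' (pt v) = 1" using chi_pt[OF False that(1)] \<open>v \<in> S'\<close> by simp
      hence "chi T' (pt v) = 1" using that(3) by simp
      thus ?thesis using chi_pt[OF False that(2)] by (auto split: if_splits)
    qed
  qed
  show ?thesis using *[OF assms] *[OF assms(2,1) assms(3)[symmetric]] by blast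
qed

lemma P1_pt: "v$4 \<noteq> 0 \<Longrightarrow> pt v \<in> P1"
proof -
  assume h: "v$4 \<noteq> 0"
  hence "v \<noteq> 0" by auto
  thus ?thesis unfolding P1_def using pt_point pt_mem_self h by blast
qed

lemma chi_Mb_P1: assumes "p \<in> P1" shows "chi (Mb b) p = 0"
proof -
  obtain w where w: "w \<in> p" "w$4 \<noteq> 0" using assms by (auto simp: P1_def)
  have "\<not> p \<subseteq> Mb b" using w by (auto simp: mem_Mb)
  thus ?thesis by (simp add: chi_def)
qed

lemma CPL1_point: fixes f :: "('a::field^4) set \<Rightarrow> bit"
  assumes "f \<in> CPL1" "p \<notin> gq_points" shows "f p = 0"
proof (rule span_lin[OF assms(1)[unfolded CPL1_def], of "\<lambda>g. g p"])
  fix g :: "('a^4) set \<Rightarrow> bit" assume "g \<in> chi ` L1"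
  then obtain m where m: "g = chi m" by blast
  thus "g p = 0" using assms(2) by (simp add: chi_nonpt)
qed (simp_all add: fadd_app)

lemma CPL1_l0: fixes f :: "('a::field^4) set \<Rightarrow> bit"
  assumes "f \<in> CPL1" "p \<in> gq_points" "p \<subseteq> l0" shows "f p = 0"
proof (rule span_lin[OF assms(1)[unfolded CPL1_def], of "\<lambda>g. g p"])
  fix g :: "('a^4) set \<Rightarrow> bit" assume "g \<in> chi ` L1"
  then obtain m where m: "m \<in> L1" "g = chi m" by blast
  have "\<not> p \<subseteq> m" using m(1) assms(2,3) by (auto simp: L1_def)
  thus "g p = 0" using m(2) by (simp add: chi_def)
qed (simp_all add: fadd_app)

lemma CPL1_phi2: fixes f :: "('a::{field,finite}^4) set \<Rightarrow> bit"
  assumes "f \<in> CPL1" "a1 \<noteq> a2" shows "phi2 a1 a2 b f = 0"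
proof (rule span_lin[OF assms(1)[unfolded CPL1_def], of "phi2 a1 a2 b"])
  fix g :: "('a^4) set \<Rightarrow> bit" assume "g \<in> chi ` L1"
  then obtain m where m: "m \<in> L1" "g = chi m" by blast
  then obtain \<alpha> \<beta> x where "m = mL \<alpha> \<beta> x" using L1_param by blast
  thus "phi2 a1 a2 b g = 0" using m(2) phi2_mL[OF assms(2)] by simp
qed (simp_all add: phi2_lin)

lemma CPL1_phi3: fixes f :: "('a::{field,finite}^4) set \<Rightarrow> bit"
  assumes "f \<in> CPL1" "even CARD('a)" shows "phi3 f = 0"
proof (rule span_lin[OF assms(1)[unfolded CPL1_def], of "phi3"])
  fix g :: "('a^4) set \<Rightarrow> bit" assume "g \<in> chi ` L1"
  then obtain m where m: "m \<in> L1" "g = chi m" by blast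
  then obtain \<alpha> \<beta> x where "m = mL \<alpha> \<beta> x" using L1_param by blast
  thus "phi3 g = 0" using m(2) phi3_mL[OF assms(2)] by simp
qed (simp_all add: phi3_lin)

lemma main_rep:
  fixes f :: "('a::{field,finite}^4) set \<Rightarrow> bit"
  assumes ev: "even CARD('a)" and fk: "f \<in> ker_piP1" and fc: "f \<in> CPL1"
  shows "\<exists>H. even (card H) \<and> f = (\<Sum>b\<in>H. chi (Mb b))"
proof -
  have F2: "f p = 0" if "p \<in> P1" for p using fk that by (simp add: ker_piP1_def)
  have F4: "f (pt (mk4 a1 b 1 0)) = f (pt (mk4 a2 b 1 0))" for a1 a2 b
  proof (cases "a1 = a2")
    case True thus ?thesis by simp
  next
    case False
    have "phi2 a1 a2 b f = 0" by (rule CPL1_phi2[OF fc False])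
    moreover have "(\<Sum>s\<in>UNIV. f (pt (mk4 (s*a1) (s*b + a2) s 1))) = 0"
      by (rule sum.neutral) (simp add: F2 P1_pt)
    moreover have "(\<Sum>s\<in>UNIV. f (pt (mk4 (s*a2) (s*b + a1) s 1))) = 0"
      by (rule sum.neutral) (simp add: F2 P1_pt)
    ultimately have "f (pt (mk4 a1 b 1 0)) + f (pt (mk4 a2 b 1 0)) = 0" unfolding phi2_def by simp
    thus ?thesis by (rule bit_add0)
  qed
  define H where "H = {b. f (pt (mk4 0 b 1 0)) = 1}"
  have F5: "(\<Sum>b\<in>UNIV. f (pt (mk4 0 b 1 0))) = 0"
  proof -
    have "phi3 f = 0" by (rule CPL1_phi3[OF fc ev])
    moreover have "(\<Sum>b\<in>UNIV. \<Sum>c\<in>UNIV. f (pt (mk4 0 b c 1))) = 0"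
      by (intro sum.neutral ballI) (simp add: F2 P1_pt)
    moreover have "(\<Sum>a\<in>UNIV. \<Sum>c\<in>UNIV. f (pt (mk4 a 0 c 1))) = 0"
      by (intro sum.neutral ballI) (simp add: F2 P1_pt)
    moreover have "(\<Sum>a\<in>UNIV. f (pt (mk4 a 0 1 0))) = 0"
    proof -
      have "(\<Sum>a\<in>UNIV. f (pt (mk4 a 0 1 0))) = (\<Sum>a\<in>(UNIV::'a set). f (pt (mk4 0 0 1 0)))"
        using F4 by (intro sum.cong) auto
      also have "\<dots> = of_nat CARD('a) * f (pt (mk4 0 0 1 0))" by simp
      also have "\<dots> = 0" using even_bit[OF ev] by simp
      finally show ?thesis .
    qed
    ultimately show ?thesis unfolding phi3_def by simp
  qed
  have cardH: "even (card H)"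
  proof -
    have "(\<Sum>b\<in>UNIV. f (pt (mk4 0 b 1 0))) = (\<Sum>b\<in>UNIV. (of_bool (b \<in> H) :: bit))"
      unfolding H_def by (intro sum.cong refl) (subst bit_eq_of_bool, simp)
    also have "\<dots> = of_nat (card H)" by simp
    finally have "(of_nat (card H) :: bit) = 0" using F5 by simp
    thus ?thesis by (simp add: of_nat_bit)
  qed
  have rep: "f = (\<Sum>b\<in>H. chi (Mb b))"
  proof (rule ext)
    fix p
    show "f p = (\<Sum>b\<in>H. chi (Mb b)) p"
      unfolding sum_fun_app
    proof (cases "p \<in> gq_points")
      case False thus "f p = (\<Sum>b\<in>H. chi (Mb b) p)" using CPL1_point[OF fc False] by (simp add: chi_nonpt)
    next
      case True then obtain v where v: "v \<noteq> 0" "p = pt v" by (metis point_pt)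
      show "f p = (\<Sum>b\<in>H. chi (Mb b) p)"
      proof (cases "v$4 = 0")
        case False
        have pP: "p \<in> P1" using v P1_pt False by simp
        have "(\<Sum>b\<in>H. chi (Mb b) p) = 0" by (rule sum.neutral) (simp add: chi_Mb_P1[OF pP])
        thus ?thesis using F2[OF pP] by simp
      next
        case z4: True
        show ?thesis
        proof (cases "v$3 = 0")
          case z3: True
          have "p \<subseteq> l0" using v z3 z4 by (simp add: pt_sub mem_l0)
          hence "f p = 0" by (rule CPL1_l0[OF fc True])
          moreover have "(\<Sum>b\<in>H. chi (Mb b) p) = (\<Sum>b\<in>H. (of_bool (v$2 = 0) :: bit))"
            using v z3 z4 by (intro sum.cong refl) (simp add: chi_Mb)
          moreover have "(\<Sum>b\<in>H. (of_bool (v$2 = 0) :: bit)) = of_nat (card H) * of_bool (v$2 = 0)" by simp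
          ultimately show ?thesis using even_bit[OF cardH] by simp
        next
          case False
          have pe: "p = pt (mk4 (v$1/v$3) (v$2/v$3) 1 0)"
          proof -
            have "(1/v$3) *s v = mk4 (v$1/v$3) (v$2/v$3) 1 0" using False z4 by (simp add: vec4_eq)
            thus ?thesis using v(2) pt_scale[of "1/v$3" v] False by simp
          qed
          have "f p = f (pt (mk4 0 (v$2/v$3) 1 0))" using pe F4 by simp
          also have "\<dots> = of_bool (v$2/v$3 \<in> H)" unfolding H_def by (subst bit_eq_of_bool) simp
          also have "\<dots> = (\<Sum>b\<in>H. chi (Mb b) p)"
          proof -
            have "(\<Sum>b\<in>H. chi (Mb b) p) = (\<Sum>b\<in>H. if b = v$2/v$3 then 1 else 0)"
              using v z4 False by (intro sum.cong refl) (auto simp: chi_Mb field_simps)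
            thus ?thesis by simp
          qed
          finally show ?thesis .
        qed
      qed
    qed
  qed
  show ?thesis using cardH rep by blast
qed

lemma ker_sub: "F2fun.subspace ker_piP1"
  unfolding ker_piP1_def by (rule F2fun.subspaceI) (auto simp: fadd_app fscale_app)

theorem lemma13:
  fixes t :: nat and l :: "('a::{field,finite} ^ 4) set"
  assumes "CARD('a) = 2 ^ t"
    and "l \<in> gq_lines" and "p0 \<subseteq> l" and "l \<noteq> l0"
  shows "F2fun.dim (ker_piP1 \<inter> (CPL1 :: (('a ^ 4) set \<Rightarrow> bit) set)) = 2 ^ t - 1
    \<and> inj_on (\<lambda>l'. chi l - chi l') {l' \<in> gq_lines. p0 \<subseteq> l' \<and> l' \<noteq> l0 \<and> l' \<noteq> l}
    \<and> F2fun.independent ((\<lambda>l'. chi l - chi l') ` {l' \<in> gq_lines. p0 \<subseteq> l' \<and> l' \<noteq> l0 \<and> l' \<noteq> l})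
    \<and> F2fun.span ((\<lambda>l'. chi l - chi l') ` {l' \<in> gq_lines. p0 \<subseteq> l' \<and> l' \<noteq> l0 \<and> l' \<noteq> l})
        = ker_piP1 \<inter> CPL1"
proof -
  have c2: "(2::'a) = 0" and tpos: "t > 0" using char2'[OF assms(1)] by auto
  have ev: "even CARD('a)" using assms(1) tpos by simp
  obtain bl where bl: "l = Mb bl" using lines_p0[OF assms(2,3,4)] by blast
  define Bs where "Bs = {l' \<in> gq_lines. p0 \<subseteq> l' \<and> l' \<noteq> l0 \<and> l' \<noteq> l}"
  have Bs_eq: "Bs = Mb ` (UNIV - {bl})"
  proof
    show "Bs \<subseteq> Mb ` (UNIV - {bl})"
    proof
      fix l' assume "l' \<in> Bs"
      hence h: "l' \<in> gq_lines" "p0 \<subseteq> l'" "l' \<noteq> l0" "l' \<noteq> l" unfolding Bs_def by auto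
      then obtain b where "l' = Mb b" using lines_p0 by blast
      thus "l' \<in> Mb ` (UNIV - {bl})" using h(4) bl by auto
    qed
    show "Mb ` (UNIV - {bl}) \<subseteq> Bs" unfolding Bs_def using bl by (auto simp: Mb_line Mb_ne_l0 Mb_inj mem_p0 mem_Mb)
  qed
  define G where "G = (\<lambda>l'. chi l - chi l') ` Bs"
  have Gel: "chi l - chi (Mb b) = chi (Mb bl) + chi (Mb b)" for b by (simp add: bl fminus_bit)
  have G_eq: "G = (\<lambda>b. chi (Mb bl) + chi (Mb b)) ` (UNIV - {bl})"
    unfolding G_def Bs_eq image_image Gel ..
  have inj: "inj_on (\<lambda>l'. chi l - chi l') Bs"
  proof (rule inj_onI)
    fix x y assume xy: "x \<in> Bs" "y \<in> Bs" "chi l - chi x = chi l - chi y"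
    have "chi l + chi x = chi l + chi y" using xy(3) by (simp only: fminus_bit)
    hence "chi x = chi y" by (simp only: add_left_cancel)
    moreover have "vec.subspace x" "vec.subspace y" using xy(1,2) by (auto simp: Bs_def gq_lines_def)
    ultimately show "x = y" using chi_inj by blast
  qed
  have indep: "F2fun.independent G"
    unfolding F2fun.independent_explicit_finite_subsets
  proof (intro allI impI ballI)
    fix S u v assume S: "S \<subseteq> G" "finite S" and sum0: "(\<Sum>w\<in>S. fscale (u w) w) = 0" and vS: "v \<in> S"
    obtain b where b: "b \<noteq> bl" "v = chi (Mb bl) + chi (Mb b)" using vS S(1) G_eq by auto
    define P where "P = pt (mk4 0 b 1 (0::'a))"
    have vP: "v P = 1" using b unfolding P_def by (simp add: fadd_app chi_Mb)
    have ev_w: "w P = (if w = v then 1 else 0)" if wG: "w \<in> G" for w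
    proof -
      obtain b' where b': "b' \<noteq> bl" "w = chi (Mb bl) + chi (Mb b')" using wG G_eq by auto
      have wP: "w P = of_bool (b = b')" using b(1) b'(2) unfolding P_def by (simp add: fadd_app chi_Mb)
      show ?thesis
      proof (cases "w = v")
        case True thus ?thesis using vP by simp
      next
        case False
        hence "b \<noteq> b'" using b b' by auto
        thus ?thesis using wP False by simp
      qed
    qed
    have "0 = (\<Sum>w\<in>S. fscale (u w) w) P" using sum0 by simp
    also have "\<dots> = (\<Sum>w\<in>S. u w * w P)" by (simp add: sum_fun_app fscale_app)
    also have "\<dots> = (\<Sum>w\<in>S. if w = v then u w else 0)"
    proof (rule sum.cong[OF refl])
      fix w assume "w \<in> S" hence "w \<in> G" using S(1) by blast
      thus "u w * w P = (if w = v then u w else 0)" using ev_w[of w] by (cases "w = v") simp_all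
    qed
    also have "\<dots> = u v" using S(2) vS by simp
    finally show "u v = 0" by simp
  qed
  have G_sub: "G \<subseteq> ker_piP1 \<inter> CPL1"
  proof
    fix g assume "g \<in> G"
    then obtain b where b: "b \<noteq> bl" "g = chi (Mb bl) + chi (Mb b)" using G_eq by auto
    have "g \<in> ker_piP1" unfolding ker_piP1_def using b(2) by (simp add: fadd_app chi_Mb_P1)
    moreover have "g \<in> CPL1"
    proof -
      have "g = (\<Sum>\<alpha>\<in>UNIV. chi (mL \<alpha> bl (\<alpha>*\<alpha>/(bl-b)))) + (\<Sum>\<alpha>\<in>UNIV. chi (mL \<alpha> b (\<alpha>*\<alpha>/(bl-b))))"
        using chi_Mb_sum[OF c2, of bl b] b by auto
      also have "\<dots> \<in> CPL1" unfolding CPL1_def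
        by (intro F2fun.span_add F2fun.span_sum F2fun.span_base imageI mL_L1)
      finally show ?thesis .
    qed
    ultimately show "g \<in> ker_piP1 \<inter> CPL1" by simp
  qed
  have span1: "F2fun.span G \<subseteq> ker_piP1 \<inter> CPL1"
    by (rule F2fun.span_minimal[OF G_sub F2fun.subspace_inter[OF ker_sub]]) (simp add: CPL1_def F2fun.subspace_span)
  have span2: "ker_piP1 \<inter> CPL1 \<subseteq> F2fun.span G"
  proof
    fix f :: "('a^4) set \<Rightarrow> bit" assume "f \<in> ker_piP1 \<inter> CPL1"
    then obtain H where H: "even (card H)" "f = (\<Sum>b\<in>H. chi (Mb b))" using main_rep[OF ev] by blast
    have inG: "chi (Mb bl) + chi (Mb b) \<in> F2fun.span G" if "b \<noteq> bl" for b
      using that G_eq by (intro F2fun.span_base) auto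
    show "f \<in> F2fun.span G"
    proof (cases "bl \<in> H")
      case False
      have Z: "(\<Sum>b\<in>H. chi (Mb bl)) = 0" using H(1) by (simp add: sum_const_fun even_bit fun_eq_iff)
      have e: "(\<Sum>b\<in>H. chi (Mb bl) + chi (Mb b)) = (\<Sum>b\<in>H. chi (Mb b))"
        by (simp only: sum.distrib Z add_0_left)
      have "f = (\<Sum>b\<in>H. chi (Mb bl) + chi (Mb b))" using H(2) e by simp
      moreover have "(\<Sum>b\<in>H. chi (Mb bl) + chi (Mb b)) \<in> F2fun.span G"
        using False by (intro F2fun.span_sum inG) auto
      ultimately show ?thesis by simp
    next
      case True
      have fin: "finite H" by simp
      have "card H > 0" using True fin card_gt_0_iff by blast
      have "card (H - {bl}) = card H - 1" using fin True by (simp add: card_Diff_singleton)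
      hence odd: "odd (card (H - {bl}))" using H(1) \<open>card H > 0\<close> by presburger
      have Z: "(\<Sum>b\<in>H - {bl}. chi (Mb bl)) = chi (Mb bl)" using odd by (simp add: sum_const_fun of_nat_bit fun_eq_iff)
      have R: "(\<Sum>b\<in>H. chi (Mb b)) = chi (Mb bl) + (\<Sum>b\<in>H - {bl}. chi (Mb b))" by (rule sum.remove[OF fin True])
      have e: "(\<Sum>b\<in>H - {bl}. chi (Mb bl) + chi (Mb b)) = (\<Sum>b\<in>H. chi (Mb b))"
        by (simp only: sum.distrib Z R)
      have "f = (\<Sum>b\<in>H - {bl}. chi (Mb bl) + chi (Mb b))" using H(2) e by simp
      moreover have "(\<Sum>b\<in>H - {bl}. chi (Mb bl) + chi (Mb b)) \<in> F2fun.span G" by (intro F2fun.span_sum inG) auto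
      ultimately show ?thesis by simp
    qed
  qed
  have span_eq: "F2fun.span G = ker_piP1 \<inter> CPL1" using span1 span2 by blast
  have "F2fun.dim (ker_piP1 \<inter> (CPL1 :: (('a ^ 4) set \<Rightarrow> bit) set)) = card G"
    using span_eq F2fun.dim_span_eq_card_independent[OF indep] by simp
  also have "card G = card Bs" unfolding G_def using inj by (rule card_image)
  also have "card Bs = CARD('a) - 1" unfolding Bs_eq
    by (simp add: card_image inj_on_def Mb_inj card_Diff_singleton)
  finally show ?thesis using assms(1) inj indep span_eq unfolding G_def Bs_def by simp
qed
end
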